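(* In the Rustichini setting there exists a game-dependent constant $\operatorname{Lip}_\Delta<\infty$ such that for every nonempty $F\in\mathcal F$ and every $x\in\mathcal K$, $$\max_{\pi\in\mathcal N(F)}\Delta(\pi,x)\le\operatorname{Lip}_\Delta\operatorname{dist}_1(x,F).$$
   Context: Rustichini setting: a $k$-action partial monitoring game with finite latent space $\mathcal Z$, loss $\mathcal L:[k]\times\mathcal Z\to[0,1]$, signal $\mathcal S:[k]\times\mathcal Z\to\Sigma$; $\mathcal K$ = probability simplex on $\mathcal Z$ (a subset of $\mathbb R^{\mathcal Z}$); $\Delta_k$ = probability simplex on $[k]$; $\mathcal L(\pi,x)=\sum_{a,z}\pi(a)x(z)\mathcal L(a,z)$; $\mathcal S(a,x)$ = law of $\mathcal S(a,z)$, $z\sim x$; $x\,\mathrm R\,y$ iff $\mathcal S(a,x)=\mathcal S(a,y)$ for all $a$; $\mathcal V(\pi,x)=\sup_{y\,\mathrm R\,x}\mathcal L(\pi,y)$; $\mathcal V_\star(x)=\min_{\pi\in\Delta_k}\mathcal V(\pi,x)$; $\Delta(\pi,x)=\mathcal V(\pi,x)-\mathcal V_\star(x)$. $m$ is the smallest integer with $\mathcal V_\star(x)=\min_{\alpha\in[m]}\mathcal V^m(x)_\alpha$ for some linear $\mathcal V^m:\mathcal K\to\mathbb R^m$; cells $P_\alpha=\{x\in\mathcal K:\mathcal V_\star(x)=\mathcal V^m(x)_\alpha\}$; $\mathcal F=\bigcup_{\alpha\in[m]}\operatorname{faces}(P_\alpha)$. $\mathcal N(x)=\{\pi\in\Delta_k:\Delta(\pi,x)=0\}$;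 for nonempty $F\in\mathcal F$, $\mathcal N(F)=\mathcal N(x)$ for any $x$ in the relative interior of $F$ (this does not depend on the choice of $x$). $\operatorname{dist}_1(x,F)=\min_{y\in F}\|x-y\|_1$. *)

theory Defs
  imports "HOL-Analysis.Analysis"
begin

text \<open>Rustichini setting. Actions: finite type 'a (= [k]); latent space: finite type 'z;
  signals: arbitrary type 's. Distributions are vectors in real^'a, real^'z.\<close>

definition prob_simplex :: "(real^'n::finite) set" where
  "prob_simplex = {x. (\<forall>i. 0 \<le> x $ i) \<and> (\<Sum>i\<in>UNIV. x $ i) = 1}"

definition lossE :: "('a::finite \<Rightarrow> 'z::finite \<Rightarrow> real) \<Rightarrow> real^'a \<Rightarrow> real^'z \<Rightarrow> real" where
  "lossE L \<pi> x = (\<Sum>a\<in>UNIV. \<Sum>z\<in>UNIV. \<pi> $ a * x $ z * L a z)"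

definition sig_equiv :: "('a \<Rightarrow> 'z::finite \<Rightarrow> 's) \<Rightarrow> real^'z \<Rightarrow> real^'z \<Rightarrow> bool" where
  "sig_equiv S x y \<longleftrightarrow>
     (\<forall>a \<sigma>. (\<Sum>z\<in>{z. S a z = \<sigma>}. x $ z) = (\<Sum>z\<in>{z. S a z = \<sigma>}. y $ z))"

definition Vfun :: "('a::finite \<Rightarrow> 'z::finite \<Rightarrow> real) \<Rightarrow> ('a \<Rightarrow> 'z \<Rightarrow> 's) \<Rightarrow> real^'a \<Rightarrow> real^'z \<Rightarrow> real" where
  "Vfun L S \<pi> x = (SUP y\<in>{y\<in>prob_simplex. sig_equiv S y x}. lossE L \<pi> y)"

definition Vstar :: "('a::finite \<Rightarrow> 'z::finite \<Rightarrow> real) \<Rightarrow> ('a \<Rightarrow> 'z \<Rightarrow> 's) \<Rightarrow> real^'z \<Rightarrow> real" where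
  "Vstar L S x = (INF \<pi>\<in>(prob_simplex :: (real^'a) set). Vfun L S \<pi> x)"

definition gap :: "('a::finite \<Rightarrow> 'z::finite \<Rightarrow> real) \<Rightarrow> ('a \<Rightarrow> 'z \<Rightarrow> 's) \<Rightarrow> real^'a \<Rightarrow> real^'z \<Rightarrow> real" where
  "gap L S \<pi> x = Vfun L S \<pi> x - Vstar L S x"

definition linf :: "real^'z::finite \<Rightarrow> real^'z \<Rightarrow> real" where
  "linf c x = (\<Sum>z\<in>UNIV. c $ z * x $ z)"

definition is_repr :: "(real^'z::finite \<Rightarrow> real) \<Rightarrow> nat \<Rightarrow> (nat \<Rightarrow> real^'z) \<Rightarrow> bool" where
  "is_repr Vs n c \<longleftrightarrow> 0 < n \<and> (\<forall>x\<in>prob_simplex. Vs x = Min ((\<lambda>\<alpha>. linf (c \<alpha>) x) ` {..<n}))"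

definition cell :: "(real^'z::finite \<Rightarrow> real) \<Rightarrow> (nat \<Rightarrow> real^'z) \<Rightarrow> nat \<Rightarrow> (real^'z) set" where
  "cell Vs c \<alpha> = {x\<in>prob_simplex. Vs x = linf (c \<alpha>) x}"

definition face_family :: "(real^'z::finite \<Rightarrow> real) \<Rightarrow> nat \<Rightarrow> (nat \<Rightarrow> real^'z) \<Rightarrow> (real^'z) set set" where
  "face_family Vs m c = (\<Union>\<alpha>\<in>{..<m}. {F. F face_of cell Vs c \<alpha>})"

definition Nset :: "('a::finite \<Rightarrow> 'z::finite \<Rightarrow> real) \<Rightarrow> ('a \<Rightarrow> 'z \<Rightarrow> 's) \<Rightarrow> real^'z \<Rightarrow> (real^'a) set" where
  "Nset L S x = {\<pi>\<in>prob_simplex. gap L S \<pi> x = 0}"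

definition NF :: "('a::finite \<Rightarrow> 'z::finite \<Rightarrow> real) \<Rightarrow> ('a \<Rightarrow> 'z \<Rightarrow> 's) \<Rightarrow> (real^'z) set \<Rightarrow> (real^'a) set" where
  "NF L S F = Nset L S (SOME x. x \<in> rel_interior F)"

definition dist1 :: "real^'z::finite \<Rightarrow> (real^'z) set \<Rightarrow> real" where
  "dist1 x F = (INF y\<in>F. \<Sum>z\<in>UNIV. \<bar>x $ z - y $ z\<bar>)"

end

theory Submission
  imports Defs "HOL-Library.FuncSet"
begin


definition kerS :: "('a::finite \<Rightarrow> 'z::finite \<Rightarrow> 's) \<Rightarrow> real^'z \<Rightarrow> bool" where
  "kerS S k \<longleftrightarrow> (\<forall>a \<sigma>. (\<Sum>z\<in>{z. S a z = \<sigma>}. k$z) = 0)"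

definition Nm :: "('a::finite \<Rightarrow> 'z::finite \<Rightarrow> 's) \<Rightarrow> real^'z \<Rightarrow> real" where
  "Nm S w = (\<Sum>a\<in>UNIV. \<Sum>\<sigma>\<in>S a ` UNIV. \<bar>\<Sum>z\<in>{z. S a z = \<sigma>}. w$z\<bar>)"

definition n1 :: "real^'z::finite \<Rightarrow> real" where
  "n1 w = (\<Sum>z\<in>UNIV. \<bar>w$z\<bar>)"

definition Osg :: "('z::finite \<Rightarrow> real) \<Rightarrow> (real^'z) set" where
  "Osg \<sigma> = {k. \<forall>z. (\<sigma> z = 0 \<longrightarrow> k$z = 0) \<and> 0 \<le> k$z * \<sigma> z}"

definition goodsg :: "('a::finite \<Rightarrow> 'z::finite \<Rightarrow> 's) \<Rightarrow> ('z \<Rightarrow> real) \<Rightarrow> bool" where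
  "goodsg S \<sigma> \<longleftrightarrow> (\<forall>k\<in>Osg \<sigma>. kerS S k \<longrightarrow> k = 0)"

lemma Nm_nonneg: "0 \<le> Nm S w"
  unfolding Nm_def by (intro sum_nonneg) auto

lemma n1_nonneg: "0 \<le> n1 w"
  unfolding n1_def by (intro sum_nonneg) auto

lemma n1_zero: "n1 w = 0 \<longleftrightarrow> w = 0"
proof
  assume "n1 w = 0"
  then have "\<forall>z\<in>UNIV. \<bar>w$z\<bar> = 0" unfolding n1_def
    by (subst sum_nonneg_eq_0_iff[symmetric]) auto
  then show "w = 0" by (simp add: vec_eq_iff)
qed (simp add: n1_def)

lemma n1_scale: "n1 (r *\<^sub>R w) = \<bar>r\<bar> * n1 w"
  unfolding n1_def by (simp add: abs_mult sum_distrib_left)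

lemma Nm_scale: "Nm S (r *\<^sub>R w) = \<bar>r\<bar> * Nm S w"
proof -
  have aux: "\<And>a \<sigma>. (\<Sum>z\<in>{z. S a z = \<sigma>}. (r *\<^sub>R w)$z) = r * (\<Sum>z\<in>{z. S a z = \<sigma>}. w$z)"
    by (simp add: sum_distrib_left)
  have "Nm S (r *\<^sub>R w) = (\<Sum>a\<in>UNIV. \<Sum>\<sigma>\<in>S a ` UNIV. \<bar>r\<bar> * \<bar>\<Sum>z\<in>{z. S a z = \<sigma>}. w$z\<bar>)"
    unfolding Nm_def by (simp only: aux abs_mult)
  also have "\<dots> = \<bar>r\<bar> * Nm S w" unfolding Nm_def by (simp add: sum_distrib_left)
  finally show ?thesis .
qed

lemma Nm_zero_ker: "Nm S w = 0 \<Longrightarrow> kerS S w"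
proof -
  assume h: "Nm S w = 0"
  have nn: "\<And>a. 0 \<le> (\<Sum>\<sigma>\<in>S a ` UNIV. \<bar>\<Sum>z\<in>{z. S a z = \<sigma>}. w$z\<bar>)"
    by (intro sum_nonneg) auto
  have 1: "\<forall>a\<in>UNIV. (\<Sum>\<sigma>\<in>S a ` UNIV. \<bar>\<Sum>z\<in>{z. S a z = \<sigma>}. w$z\<bar>) = 0"
    using h nn unfolding Nm_def by (simp add: sum_nonneg_eq_0_iff)
  show ?thesis unfolding kerS_def
  proof (intro allI)
    fix a \<sigma>
    show "(\<Sum>z\<in>{z. S a z = \<sigma>}. w$z) = 0"
    proof (cases "\<sigma> \<in> S a ` UNIV")
      case True
      have "(\<Sum>\<sigma>\<in>S a ` UNIV. \<bar>\<Sum>z\<in>{z. S a z = \<sigma>}. w$z\<bar>) = 0" using 1 by simp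
      then have "\<forall>\<sigma>\<in>S a ` UNIV. \<bar>\<Sum>z\<in>{z. S a z = \<sigma>}. w$z\<bar> = 0"
        by (simp add: sum_nonneg_eq_0_iff)
      then have "\<bar>\<Sum>z\<in>{z. S a z = \<sigma>}. w$z\<bar> = 0" using True by (rule bspec)
      then show ?thesis by simp
    next
      case False
      then have "{z. S a z = \<sigma>} = {}" by auto
      then show ?thesis by simp
    qed
  qed
qed

lemma continuous_Nm: "continuous_on X (Nm S)"
  unfolding Nm_def by (intro continuous_intros)

lemma closed_Osg: "closed (Osg \<sigma>)"
proof -
  have "Osg \<sigma> = (\<Inter>z. {k. (\<sigma> z = 0 \<longrightarrow> k$z = 0) \<and> 0 \<le> k$z * \<sigma> z})"
    unfolding Osg_def by auto
  moreover have "closed {k::real^'a. (\<sigma> z = 0 \<longrightarrow> k$z = 0) \<and> 0 \<le> k$z * \<sigma> z}" for z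
    by (cases "\<sigma> z = 0") (auto intro!: closed_Collect_eq closed_Collect_le continuous_intros)
  ultimately show ?thesis by auto
qed

lemma closed_n1: "closed {k::real^'z::finite. n1 k = 1}"
  unfolding n1_def by (intro closed_Collect_eq continuous_intros)

lemma good_const:
  assumes "goodsg S \<sigma>"
  shows "\<exists>c>0. \<forall>k\<in>Osg \<sigma>. c * n1 k \<le> Nm S k"
proof -
  define U where "U = Osg \<sigma> \<inter> {k. n1 k = 1}"
  have scaleO: "(1 / n1 k) *\<^sub>R k \<in> U" if "k \<in> Osg \<sigma>" "k \<noteq> 0" for k
  proof -
    have "n1 k \<noteq> 0" using that(2) n1_zero by blast
    then have p: "n1 k > 0" using n1_nonneg[of k] by linarith
    have "(1 / n1 k) *\<^sub>R k \<in> Osg \<sigma>" using that(1) p unfolding Osg_def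
      by (auto simp: mult.assoc)
    moreover have "n1 ((1 / n1 k) *\<^sub>R k) = 1" using p by (simp add: n1_scale)
    ultimately show ?thesis unfolding U_def by auto
  qed
  show ?thesis
  proof (cases "U = {}")
    case True
    then have "\<forall>k\<in>Osg \<sigma>. k = 0" using scaleO by blast
    have "1 * n1 k \<le> Nm S k" if "k \<in> Osg \<sigma>" for k
      using \<open>\<forall>k\<in>Osg \<sigma>. k = 0\<close> that Nm_nonneg[of S k] n1_zero[of k] by simp
    then show ?thesis by (intro exI[of _ 1]) auto
  next
    case False
    have bU: "bounded U"
    proof -
      have "norm k \<le> 1" if "k \<in> U" for k
        using that norm_le_l1_cart[of k] unfolding U_def n1_def by auto
      then show ?thesis unfolding bounded_iff by blast
    qed
    have cU: "compact U"
      using bU closed_Int[OF closed_Osg closed_n1] by (simp add: U_def compact_eq_bounded_closed)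
    obtain k0 where k0: "k0 \<in> U" "\<forall>k\<in>U. Nm S k0 \<le> Nm S k"
      using continuous_attains_inf[OF cU False continuous_Nm] by blast
    have pos: "Nm S k0 > 0"
    proof (rule ccontr)
      assume "\<not> Nm S k0 > 0"
      then have "Nm S k0 = 0" using Nm_nonneg[of S k0] by linarith
      then have "kerS S k0" by (rule Nm_zero_ker)
      then have "k0 = 0" using assms k0(1) unfolding goodsg_def U_def by auto
      then show False using k0(1) unfolding U_def by (simp add: n1_def)
    qed
    show ?thesis
    proof (intro exI[of _ "Nm S k0"] conjI pos ballI)
      fix k assume kO: "k \<in> Osg \<sigma>"
      show "Nm S k0 * n1 k \<le> Nm S k"
      proof (cases "k = 0")
        case True then show ?thesis using Nm_nonneg[of S k] n1_zero[of k] by simp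
      next
        case False
        have "n1 k \<noteq> 0" using False n1_zero by blast
        then have p: "n1 k > 0" using n1_nonneg[of k] by linarith
        have "Nm S k0 \<le> Nm S ((1 / n1 k) *\<^sub>R k)" using k0(2) scaleO[OF kO False] by blast
        also have "\<dots> = Nm S k / n1 k" using p by (simp add: Nm_scale)
        finally show ?thesis using p by (simp add: pos_le_divide_eq)
      qed
    qed
  qed
qed



lemma finite_signs: "finite {\<sigma>::'z::finite \<Rightarrow> real. \<forall>z. \<sigma> z \<in> {-1,0,1}}"
proof -
  have "{\<sigma>::'z \<Rightarrow> real. \<forall>z. \<sigma> z \<in> {-1,0,1}} = PiE UNIV (\<lambda>_. {-1,0,1})"
    by (auto simp: PiE_UNIV_domain Pi_def)
  then show ?thesis by (simp add: finite_PiE)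
qed

lemma global_const:
  fixes S :: "'a::finite \<Rightarrow> 'z::finite \<Rightarrow> 's"
  shows "\<exists>C>0. \<forall>k. goodsg S (\<lambda>z. sgn (k$z)) \<longrightarrow> n1 k \<le> C * Nm S k"
proof -
  define G where "G = {\<sigma>::'z \<Rightarrow> real. (\<forall>z. \<sigma> z \<in> {-1,0,1}) \<and> goodsg S \<sigma>}"
  have fin: "finite G" unfolding G_def
    by (rule finite_subset[OF _ finite_signs]) auto
  have "\<forall>\<sigma>\<in>G. \<exists>c>0. \<forall>k\<in>Osg \<sigma>. c * n1 k \<le> Nm S k" using good_const unfolding G_def by blast
  then obtain cf where cf: "\<forall>\<sigma>\<in>G. cf \<sigma> > 0 \<and> (\<forall>k\<in>Osg \<sigma>. cf \<sigma> * n1 k \<le> Nm S k)"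
    by metis
  define cm where "cm = Min (insert 1 (cf ` G))"
  have cmin: "cm \<in> insert 1 (cf ` G)" unfolding cm_def using fin by (intro Min_in) auto
  have cmpos: "cm > 0" using cmin cf by auto
  have cmle: "cm \<le> cf \<sigma>" if "\<sigma> \<in> G" for \<sigma>
    unfolding cm_def using fin that by (intro Min_le) auto
  show ?thesis
  proof (intro exI[of _ "1 / cm"] conjI allI impI)
    show "0 < 1 / cm" using cmpos by simp
    fix k :: "real^'z"
    assume g: "goodsg S (\<lambda>z. sgn (k$z))"
    have inG: "(\<lambda>z. sgn (k$z)) \<in> G" unfolding G_def using g by (auto simp: sgn_real_def)
    have inO: "k \<in> Osg (\<lambda>z. sgn (k$z))" unfolding Osg_def
      by (auto simp: sgn_real_def mult_nonneg_nonpos)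
    have "cm * n1 k \<le> cf (\<lambda>z. sgn (k$z)) * n1 k"
      using cmle[OF inG] n1_nonneg[of k] by (rule mult_right_mono)
    also have "\<dots> \<le> Nm S k" using cf inG inO by blast
    finally show "n1 k \<le> 1 / cm * Nm S k" using cmpos by (simp add: field_simps)
  qed
qed

definition btw :: "real \<Rightarrow> real \<Rightarrow> bool" where
  "btw a b \<longleftrightarrow> (0 \<le> b \<longrightarrow> 0 \<le> a \<and> a \<le> b) \<and> (b < 0 \<longrightarrow> b \<le> a \<and> a \<le> 0)"

lemma btw_refl: "btw a a" by (auto simp: btw_def)

lemma btw_trans: "btw a b \<Longrightarrow> btw b c \<Longrightarrow> btw a c"
  unfolding btw_def by linarith

lemma kerS_diff_iff: "kerS S (u - v) \<longleftrightarrow> (\<forall>a \<sigma>. (\<Sum>z\<in>{z. S a z = \<sigma>}. u$z) = (\<Sum>z\<in>{z. S a z = \<sigma>}. v$z))"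
  by (simp add: kerS_def sum_subtractf)

lemma reduce:
  fixes S :: "'a::finite \<Rightarrow> 'z::finite \<Rightarrow> 's"
  shows "\<exists>w. (\<forall>z. btw (w$z) (v$z)) \<and> kerS S (w - v) \<and> goodsg S (\<lambda>z. sgn (w$z))"
proof -
  define P where "P = (\<lambda>w. (\<forall>z. btw (w$z) (v$z)) \<and> kerS S (w - v))"
  have Pv: "P v" unfolding P_def by (simp add: btw_refl kerS_def)
  obtain w where w: "P w" and wmin: "\<forall>y. P y \<longrightarrow> card {z. w$z \<noteq> 0} \<le> card {z. y$z \<noteq> 0}"
    using ex_has_least_nat[of P v "\<lambda>w. card {z. w$z \<noteq> 0}"] Pv by blast
  have "goodsg S (\<lambda>z. sgn (w$z))"
  proof (rule ccontr)
    assume "\<not> goodsg S (\<lambda>z. sgn (w$z))"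
    then obtain k where kO: "k \<in> Osg (\<lambda>z. sgn (w$z))" and kk: "kerS S k" and kn: "k \<noteq> 0"
      unfolding goodsg_def by blast
    define Z where "Z = {z. k$z \<noteq> 0}"
    have Zne: "Z \<noteq> {}" using kn unfolding Z_def by (auto simp: vec_eq_iff)
    have kw: "0 < k$z * w$z" if "k$z \<noteq> 0" for z
    proof -
      have a: "sgn (w$z) = 0 \<longrightarrow> k$z = 0" and b: "0 \<le> k$z * sgn (w$z)"
        using kO unfolding Osg_def by auto
      show ?thesis
      proof (cases "w$z > 0")
        case True then show ?thesis using b that by (simp add: zero_less_mult_iff)
      next
        case False
        then have "w$z < 0" using a that by (cases "w$z = 0") auto
        then show ?thesis using b that by (auto simp: zero_less_mult_iff mult_le_0_iff)
      qed
    qed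
    define s where "s = Min ((\<lambda>z. w$z / k$z) ` Z)"
    have "s \<in> (\<lambda>z. w$z / k$z) ` Z" unfolding s_def using Zne by (intro Min_in) auto
    then obtain z0 where z0: "z0 \<in> Z" "s = w$z0 / k$z0" by blast
    have sle: "s \<le> w$z / k$z" if "z \<in> Z" for z unfolding s_def using that by (intro Min_le) auto
    have spos: "s > 0" using kw[of z0] z0 unfolding Z_def
      by (auto simp: zero_less_divide_iff zero_less_mult_iff)
    define w' where "w' = w - s *\<^sub>R k"
    have btw': "btw (w'$z) (w$z)" for z
    proof (cases "k$z = 0")
      case True then show ?thesis by (simp add: w'_def btw_refl)
    next
      case False
      have p: "0 < k$z * w$z" by (rule kw[OF False])
      have sl: "s \<le> w$z / k$z" using sle False unfolding Z_def by auto
      show ?thesis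
      proof (cases "k$z > 0")
        case True
        then have wp: "w$z > 0" using p by (simp add: zero_less_mult_iff)
        have "s * k$z \<le> w$z" using sl True by (simp add: pos_le_divide_eq)
        moreover have "0 < s * k$z" using spos True by simp
        ultimately show ?thesis using wp by (simp add: w'_def btw_def)
      next
        case False
        then have kn': "k$z < 0" using \<open>k$z \<noteq> 0\<close> by simp
        then have wn: "w$z < 0" using p by (simp add: zero_less_mult_iff)
        have "w$z \<le> s * k$z" using sl kn' by (simp add: neg_le_divide_eq)
        moreover have "s * k$z < 0" using spos kn' by (simp add: mult_pos_neg)
        ultimately show ?thesis using wn by (simp add: w'_def btw_def)
      qed
    qed
    have Pw': "P w'"
    proof -
      have "\<forall>z. btw (w'$z) (v$z)" using btw' w unfolding P_def using btw_trans by blast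
      moreover have "kerS S (w' - v)"
      proof -
        have eq: "w' - v = (w - v) - s *\<^sub>R k" by (simp add: w'_def algebra_simps)
        have kr: "kerS S ((w - v) - s *\<^sub>R k)"
          using w kk unfolding P_def kerS_def by (simp add: sum_subtractf sum_distrib_left[symmetric])
        show ?thesis unfolding eq by (rule kr)
      qed
      ultimately show ?thesis unfolding P_def by blast
    qed
    have sub: "{z. w'$z \<noteq> 0} \<subset> {z. w$z \<noteq> 0}"
    proof
      show "{z. w'$z \<noteq> 0} \<subseteq> {z. w$z \<noteq> 0}"
      proof
        fix z assume "z \<in> {z. w'$z \<noteq> 0}"
        then have "w'$z \<noteq> 0" by simp
        show "z \<in> {z. w$z \<noteq> 0}"
        proof (rule ccontr)
          assume "z \<notin> {z. w$z \<noteq> 0}"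
          then have w0: "w$z = 0" by simp
          then have "k$z = 0" using kw[of z] by (cases "k$z = 0") auto
          then show False using w0 \<open>w'$z \<noteq> 0\<close> by (simp add: w'_def)
        qed
      qed
      have "w$z0 \<noteq> 0" using kw[of z0] z0 unfolding Z_def by auto
      moreover have "w'$z0 = 0" using z0 unfolding Z_def by (simp add: w'_def)
      ultimately show "{z. w'$z \<noteq> 0} \<noteq> {z. w$z \<noteq> 0}" by blast
    qed
    have "card {z. w'$z \<noteq> 0} < card {z. w$z \<noteq> 0}" by (rule psubset_card_mono[OF _ sub]) simp
    then show False using wmin Pw' by fastforce
  qed
  then show ?thesis using w unfolding P_def by blast
qed

lemma Nm_cong: "kerS S (u - v) \<Longrightarrow> Nm S u = Nm S v"
  unfolding kerS_diff_iff Nm_def by simp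

lemma hoffman:
  fixes S :: "'a::finite \<Rightarrow> 'z::finite \<Rightarrow> 's"
  shows "\<exists>C>0. \<forall>y y'. (\<forall>z. 0 \<le> y$z) \<longrightarrow> (\<forall>z. 0 \<le> y'$z) \<longrightarrow>
   (\<exists>y''. (\<forall>z. 0 \<le> y''$z) \<and> sig_equiv S y'' y \<and> n1 (y'' - y') \<le> C * Nm S (y - y'))"
proof -
  obtain C where C: "C > 0" "\<forall>k. goodsg S (\<lambda>z. sgn (k$z)) \<longrightarrow> n1 k \<le> C * Nm S k"
    using global_const by blast
  show ?thesis
  proof (intro exI[of _ C] conjI allI impI C(1))
    fix y y' :: "real^'z"
    assume y: "\<forall>z. 0 \<le> y$z" and y': "\<forall>z. 0 \<le> y'$z"
    define v where "v = y - y'"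
    obtain w where w: "\<forall>z. btw (w$z) (v$z)" "kerS S (w - v)" "goodsg S (\<lambda>z. sgn (w$z))"
      using reduce by blast
    show "\<exists>y''. (\<forall>z. 0 \<le> y''$z) \<and> sig_equiv S y'' y \<and> n1 (y'' - y') \<le> C * Nm S (y - y')"
    proof (intro exI[of _ "y' + w"] conjI allI)
      fix z
      show "0 \<le> (y' + w)$z"
      proof -
        have "btw (w$z) (y$z - y'$z)" using w(1) unfolding v_def by simp
        then have "(0 \<le> y$z - y'$z \<longrightarrow> 0 \<le> w$z) \<and> (y$z - y'$z < 0 \<longrightarrow> y$z - y'$z \<le> w$z)"
          unfolding btw_def by blast
        moreover have "0 \<le> y$z" "0 \<le> y'$z" using y y' by auto
        ultimately have "0 \<le> y'$z + w$z" by linarith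
        then show ?thesis by simp
      qed
    next
      have "\<forall>a \<sigma>. (\<Sum>z\<in>{z. S a z = \<sigma>}. w$z) = (\<Sum>z\<in>{z. S a z = \<sigma>}. v$z)"
        using w(2) unfolding kerS_diff_iff .
      then have hw: "(\<Sum>z\<in>{z. S a z = \<sigma>}. w$z) = (\<Sum>z\<in>{z. S a z = \<sigma>}. y$z) - (\<Sum>z\<in>{z. S a z = \<sigma>}. y'$z)" for a \<sigma>
        unfolding v_def by (simp add: sum_subtractf)
      show "sig_equiv S (y' + w) y"
        unfolding sig_equiv_def
      proof (intro allI)
        fix a \<sigma>
        have "(\<Sum>z\<in>{z. S a z = \<sigma>}. (y' + w)$z) = (\<Sum>z\<in>{z. S a z = \<sigma>}. y'$z) + (\<Sum>z\<in>{z. S a z = \<sigma>}. w$z)"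
          by (simp add: sum.distrib)
        then show "(\<Sum>z\<in>{z. S a z = \<sigma>}. (y' + w)$z) = (\<Sum>z\<in>{z. S a z = \<sigma>}. y$z)"
          using hw[of a \<sigma>] by linarith
      qed
    next
      have "n1 (y' + w - y') = n1 w" by simp
      also have "\<dots> \<le> C * Nm S w" using C(2) w(3) by blast
      also have "Nm S w = Nm S (y - y')" using Nm_cong[OF w(2)] by (simp add: v_def)
      finally show "n1 (y' + w - y') \<le> C * Nm S (y - y')" .
    qed
  qed
qed



lemma simplex_nonneg: "x \<in> prob_simplex \<Longrightarrow> 0 \<le> x$z"
  unfolding prob_simplex_def by auto

lemma simplex_sum: "x \<in> prob_simplex \<Longrightarrow> (\<Sum>z\<in>UNIV. x$z) = 1"
  unfolding prob_simplex_def by auto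

lemma lossE_comb: "lossE L \<pi> (a *\<^sub>R u + b *\<^sub>R v) = a * lossE L \<pi> u + b * lossE L \<pi> v"
proof -
  have "lossE L \<pi> (a *\<^sub>R u + b *\<^sub>R v) = (\<Sum>i\<in>UNIV. \<Sum>z\<in>UNIV. a * (\<pi> $ i * u $ z * L i z) + b * (\<pi> $ i * v $ z * L i z))"
    unfolding lossE_def by (intro sum.cong refl) (simp add: algebra_simps)
  also have "\<dots> = a * lossE L \<pi> u + b * lossE L \<pi> v"
    unfolding lossE_def by (simp add: sum.distrib sum_distrib_left)
  finally show ?thesis .
qed

lemma linf_comb: "linf c (a *\<^sub>R u + b *\<^sub>R v) = a * linf c u + b * linf c v"
proof -
  have "linf c (a *\<^sub>R u + b *\<^sub>R v) = (\<Sum>z\<in>UNIV. a * (c $ z * u $ z) + b * (c $ z * v $ z))"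
    unfolding linf_def by (intro sum.cong refl) (simp add: algebra_simps)
  also have "\<dots> = a * linf c u + b * linf c v"
    unfolding linf_def by (simp add: sum.distrib sum_distrib_left)
  finally show ?thesis .
qed

lemma lossE_nonneg:
  assumes hL: "\<forall>a z. 0 \<le> L a z \<and> L a z \<le> 1" and "\<pi> \<in> prob_simplex" "y \<in> prob_simplex"
  shows "0 \<le> lossE L \<pi> y"
  unfolding lossE_def using simplex_nonneg[OF assms(2)] simplex_nonneg[OF assms(3)] hL
  by (intro sum_nonneg mult_nonneg_nonneg) auto

lemma lossE_le1:
  assumes hL: "\<forall>a z. 0 \<le> L a z \<and> L a z \<le> 1" and p: "\<pi> \<in> prob_simplex" and yy: "y \<in> prob_simplex"
  shows "lossE L \<pi> y \<le> 1"
proof -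
  have "lossE L \<pi> y \<le> (\<Sum>a\<in>UNIV. \<Sum>z\<in>UNIV. \<pi> $ a * y $ z)"
    unfolding lossE_def
  proof (intro sum_mono)
    fix a z
    have "0 \<le> \<pi> $ a * y $ z" using simplex_nonneg[OF p, of a] simplex_nonneg[OF yy, of z] by simp
    then show "\<pi> $ a * y $ z * L a z \<le> \<pi> $ a * y $ z"
      using hL mult_left_le[of "L a z" "\<pi> $ a * y $ z"] by auto
  qed
  also have "\<dots> = (\<Sum>a\<in>UNIV. \<pi> $ a * (\<Sum>z\<in>UNIV. y $ z))" by (simp add: sum_distrib_left)
  also have "\<dots> = 1" using simplex_sum[OF p] simplex_sum[OF yy] by simp
  finally show ?thesis .
qed

lemma lossE_lip:
  assumes hL: "\<forall>a z. 0 \<le> L a z \<and> L a z \<le> 1" and p: "\<pi> \<in> prob_simplex"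
  shows "lossE L \<pi> u - lossE L \<pi> u' \<le> n1 (u - u')"
proof -
  have "lossE L \<pi> u - lossE L \<pi> u' = (\<Sum>a\<in>UNIV. \<Sum>z\<in>UNIV. \<pi> $ a * (u $ z - u' $ z) * L a z)"
    unfolding lossE_def by (simp add: sum_subtractf[symmetric] algebra_simps)
  also have "\<dots> \<le> (\<Sum>a\<in>UNIV. \<Sum>z\<in>UNIV. \<pi> $ a * \<bar>u $ z - u' $ z\<bar>)"
  proof (intro sum_mono)
    fix a z
    have pa: "0 \<le> \<pi> $ a" using simplex_nonneg[OF p] by simp
    have "(u $ z - u' $ z) * L a z \<le> \<bar>u $ z - u' $ z\<bar>"
    proof -
      have "(u $ z - u' $ z) * L a z \<le> \<bar>(u $ z - u' $ z) * L a z\<bar>" by simp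
      also have "\<dots> = \<bar>u $ z - u' $ z\<bar> * L a z" using hL by (simp add: abs_mult)
      also have "\<dots> \<le> \<bar>u $ z - u' $ z\<bar>" using hL mult_left_le[of "L a z" "\<bar>u $ z - u' $ z\<bar>"] by auto
      finally show ?thesis .
    qed
    then show "\<pi> $ a * (u $ z - u' $ z) * L a z \<le> \<pi> $ a * \<bar>u $ z - u' $ z\<bar>"
      using mult_left_mono[OF _ pa] by (simp add: mult.assoc)
  qed
  also have "\<dots> = (\<Sum>a\<in>UNIV. \<pi> $ a) * n1 (u - u')"
    unfolding n1_def by (simp add: sum_distrib_left[symmetric] sum_distrib_right[symmetric])
  also have "\<dots> = n1 (u - u')" using simplex_sum[OF p] by simp
  finally show ?thesis .
qed

lemma n1_commute: "n1 (u - v) = n1 (v - u)"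
  unfolding n1_def by (simp add: abs_minus_commute)

lemma sig_equiv_refl: "sig_equiv S x x"
  unfolding sig_equiv_def by simp

lemma sig_equiv_comb:
  assumes "sig_equiv S u x" "sig_equiv S v y"
  shows "sig_equiv S (a *\<^sub>R u + b *\<^sub>R v) (a *\<^sub>R x + b *\<^sub>R y)"
  using assms unfolding sig_equiv_def by (simp add: sum.distrib sum_distrib_left[symmetric])

lemma sig_equiv_sum:
  fixes S :: "'a::finite \<Rightarrow> 'z::finite \<Rightarrow> 's"
  assumes "sig_equiv S y x"
  shows "(\<Sum>z\<in>UNIV. y$z) = (\<Sum>z\<in>UNIV. x$z)"
proof -
  obtain a :: 'a where True by blast
  have "(\<Sum>z\<in>UNIV. y$z) = (\<Sum>\<sigma>\<in>S a ` UNIV. \<Sum>z\<in>{z\<in>UNIV. S a z = \<sigma>}. y$z)"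
    by (rule sum.image_gen) simp
  also have "\<dots> = (\<Sum>\<sigma>\<in>S a ` UNIV. \<Sum>z\<in>{z\<in>UNIV. S a z = \<sigma>}. x$z)"
    using assms unfolding sig_equiv_def by simp
  also have "\<dots> = (\<Sum>z\<in>UNIV. x$z)"
    by (rule sum.image_gen[symmetric]) simp
  finally show ?thesis .
qed

lemma Nm_le:
  fixes S :: "'a::finite \<Rightarrow> 'z::finite \<Rightarrow> 's"
  shows "Nm S d \<le> real CARD('a) * n1 d"
proof -
  have "(\<Sum>\<sigma>\<in>S a ` UNIV. \<bar>\<Sum>z\<in>{z. S a z = \<sigma>}. d$z\<bar>) \<le> n1 d" for a
  proof -
    have "(\<Sum>\<sigma>\<in>S a ` UNIV. \<bar>\<Sum>z\<in>{z. S a z = \<sigma>}. d$z\<bar>) \<le> (\<Sum>\<sigma>\<in>S a ` UNIV. \<Sum>z\<in>{z\<in>UNIV. S a z = \<sigma>}. \<bar>d$z\<bar>)"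
      by (intro sum_mono) (simp add: sum_abs)
    also have "\<dots> = n1 d" unfolding n1_def
      by (rule sum.image_gen[symmetric]) simp
    finally show ?thesis .
  qed
  then have "Nm S d \<le> (\<Sum>a\<in>(UNIV::'a set). n1 d)" unfolding Nm_def by (intro sum_mono) auto
  also have "\<dots> = real CARD('a) * n1 d" by simp
  finally show ?thesis .
qed

lemma Nm_equiv:
  assumes "sig_equiv S y' x"
  shows "Nm S (y - y') = Nm S (y - x)"
proof (rule Nm_cong)
  show "kerS S (y - y' - (y - x))"
    using assms unfolding kerS_diff_iff sig_equiv_def by (simp add: sum_subtractf)
qed

definition Fb :: "('a::finite \<Rightarrow> 'z::finite \<Rightarrow> 's) \<Rightarrow> real^'z \<Rightarrow> (real^'z) set" where
  "Fb S x = {y\<in>prob_simplex. sig_equiv S y x}"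

lemma Vfun_Fb: "Vfun L S \<pi> x = (SUP y\<in>Fb S x. lossE L \<pi> y)"
  unfolding Vfun_def Fb_def ..

lemma Fb_self: "x \<in> prob_simplex \<Longrightarrow> x \<in> Fb S x"
  unfolding Fb_def by (simp add: sig_equiv_refl)

lemma Vfun_upper:
  assumes hL: "\<forall>a z. 0 \<le> L a z \<and> L a z \<le> 1" and p: "\<pi> \<in> prob_simplex" and "y \<in> Fb S x"
  shows "lossE L \<pi> y \<le> Vfun L S \<pi> x"
  unfolding Vfun_Fb
proof (rule cSUP_upper[OF assms(3)])
  show "bdd_above ((\<lambda>y. lossE L \<pi> y) ` Fb S x)"
    using lossE_le1[OF hL p] unfolding Fb_def bdd_above_def by blast
qed

lemma Vfun_least:
  assumes "x \<in> prob_simplex" "\<And>y. y \<in> Fb S x \<Longrightarrow> lossE L \<pi> y \<le> M"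
  shows "Vfun L S \<pi> x \<le> M"
  unfolding Vfun_Fb using assms Fb_self[OF assms(1)] by (intro cSUP_least) auto

lemma Vfun_nonneg:
  assumes hL: "\<forall>a z. 0 \<le> L a z \<and> L a z \<le> 1" and p: "\<pi> \<in> prob_simplex" and x: "x \<in> prob_simplex"
  shows "0 \<le> Vfun L S \<pi> x"
  using lossE_nonneg[OF hL p x] Vfun_upper[OF hL p Fb_self[OF x], of S] by linarith

lemma Vstar_le:
  assumes hL: "\<forall>a z. 0 \<le> L a z \<and> L a z \<le> 1" and p: "\<pi> \<in> prob_simplex" and x: "x \<in> prob_simplex"
  shows "Vstar L S x \<le> Vfun L S \<pi> x"
  unfolding Vstar_def
proof (rule cINF_lower[OF _ p])
  show "bdd_below ((\<lambda>\<pi>. Vfun L S \<pi> x) ` prob_simplex)"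
    using Vfun_nonneg[OF hL _ x] unfolding bdd_below_def by blast
qed

lemma gap_nonneg:
  assumes hL: "\<forall>a z. 0 \<le> L a z \<and> L a z \<le> 1" and p: "\<pi> \<in> prob_simplex" and x: "x \<in> prob_simplex"
  shows "0 \<le> gap L S \<pi> x"
  using Vstar_le[OF assms] unfolding gap_def by simp

lemma Vfun_lip:
  fixes L :: "'a::finite \<Rightarrow> 'z::finite \<Rightarrow> real" and S :: "'a \<Rightarrow> 'z \<Rightarrow> 's"
  assumes hL: "\<forall>a z. 0 \<le> L a z \<and> L a z \<le> 1"
  shows "\<exists>C1\<ge>0. \<forall>\<pi>\<in>prob_simplex. \<forall>x\<in>prob_simplex. \<forall>y\<in>prob_simplex.
           Vfun L S \<pi> x \<le> Vfun L S \<pi> y + C1 * n1 (x - y)"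
proof -
  obtain C where C: "C > 0" "\<forall>y y'. (\<forall>z. 0 \<le> y$z) \<longrightarrow> (\<forall>z. 0 \<le> y'$z) \<longrightarrow>
   (\<exists>y''. (\<forall>z. 0 \<le> y''$z) \<and> sig_equiv S y'' y \<and> n1 (y'' - y') \<le> C * Nm S (y - y'))"
    using hoffman[of S] by blast
  show ?thesis
  proof (intro exI[of _ "C * real CARD('a)"] conjI ballI)
    show "0 \<le> C * real CARD('a)" using C(1) by simp
    fix \<pi> :: "real^'a" and x y :: "real^'z"
    assume p: "\<pi> \<in> prob_simplex" and x: "x \<in> prob_simplex" and y: "y \<in> prob_simplex"
    show "Vfun L S \<pi> x \<le> Vfun L S \<pi> y + C * real CARD('a) * n1 (x - y)"
    proof (rule Vfun_least[OF x])
      fix y' assume y': "y' \<in> Fb S x"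
      have y'S: "y' \<in> prob_simplex" and y'e: "sig_equiv S y' x" using y' unfolding Fb_def
        by auto
      have y'n: "\<forall>z. 0 \<le> y'$z" using simplex_nonneg[OF y'S] by simp
      have yn: "\<forall>z. 0 \<le> y$z" using simplex_nonneg[OF y] by simp
      obtain y'' where y'': "\<forall>z. 0 \<le> y''$z" "sig_equiv S y'' y" "n1 (y'' - y') \<le> C * Nm S (y - y')"
        using C(2) y'n yn by blast
      have "(\<Sum>z\<in>UNIV. y''$z) = 1" using sig_equiv_sum[OF y''(2)] simplex_sum[OF y] by simp
      then have y''F: "y'' \<in> Fb S y" using y'' unfolding Fb_def prob_simplex_def by auto
      have "Nm S (y - y') = Nm S (y - x)" by (rule Nm_equiv[OF y'e])
      also have "\<dots> \<le> real CARD('a) * n1 (y - x)" by (rule Nm_le)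
      finally have "n1 (y'' - y') \<le> C * (real CARD('a) * n1 (y - x))"
        using y''(3) C(1) by (meson mult_left_mono less_imp_le order_trans)
      then have d: "n1 (y' - y'') \<le> C * real CARD('a) * n1 (x - y)"
        by (simp add: n1_commute[of y' y''] n1_commute[of y x] mult.assoc)
      have "lossE L \<pi> y' \<le> lossE L \<pi> y'' + n1 (y' - y'')"
        using lossE_lip[OF hL p, of y' y''] by linarith
      also have "\<dots> \<le> Vfun L S \<pi> y + C * real CARD('a) * n1 (x - y)"
        using Vfun_upper[OF hL p y''F] d by linarith
      finally show "lossE L \<pi> y' \<le> Vfun L S \<pi> y + C * real CARD('a) * n1 (x - y)" .
    qed
  qed
qed



lemma simplex_comb:
  assumes "u \<in> prob_simplex" "v \<in> prob_simplex" "0 \<le> t" "t \<le> 1"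
  shows "(1 - t) *\<^sub>R u + t *\<^sub>R v \<in> prob_simplex"
proof -
  have "\<forall>z. 0 \<le> ((1 - t) *\<^sub>R u + t *\<^sub>R v)$z"
    using simplex_nonneg[OF assms(1)] simplex_nonneg[OF assms(2)] assms(3,4) by simp
  moreover have "(\<Sum>z\<in>UNIV. ((1 - t) *\<^sub>R u + t *\<^sub>R v)$z) = 1"
    using simplex_sum[OF assms(1)] simplex_sum[OF assms(2)]
    by (simp add: sum.distrib sum_distrib_left[symmetric])
  ultimately show ?thesis unfolding prob_simplex_def by blast
qed

lemma Vfun_concave:
  assumes hL: "\<forall>a z. 0 \<le> L a z \<and> L a z \<le> 1" and p: "\<pi> \<in> prob_simplex"
    and y: "y \<in> prob_simplex" and w: "w \<in> prob_simplex" and t: "0 < t" "t < 1"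
  shows "(1 - t) * Vfun L S \<pi> y + t * Vfun L S \<pi> w \<le> Vfun L S \<pi> ((1 - t) *\<^sub>R y + t *\<^sub>R w)"
proof -
  define M where "M = Vfun L S \<pi> ((1 - t) *\<^sub>R y + t *\<^sub>R w)"
  have key: "(1 - t) * lossE L \<pi> y1 + t * lossE L \<pi> w1 \<le> M" if "y1 \<in> Fb S y" "w1 \<in> Fb S w" for y1 w1
  proof -
    have "(1 - t) *\<^sub>R y1 + t *\<^sub>R w1 \<in> Fb S ((1 - t) *\<^sub>R y + t *\<^sub>R w)"
      using that t simplex_comb[of y1 w1 t] sig_equiv_comb[of S y1 y w1 w "1 - t" t]
      unfolding Fb_def by auto
    from Vfun_upper[OF hL p this] show ?thesis unfolding M_def by (simp add: lossE_comb)
  qed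
  have s1: "Vfun L S \<pi> y \<le> (M - t * lossE L \<pi> w1) / (1 - t)" if "w1 \<in> Fb S w" for w1
  proof (rule Vfun_least[OF y])
    fix y1 assume "y1 \<in> Fb S y"
    from key[OF this that] t show "lossE L \<pi> y1 \<le> (M - t * lossE L \<pi> w1) / (1 - t)"
      by (simp add: pos_le_divide_eq mult.commute)
  qed
  have s2: "Vfun L S \<pi> w \<le> (M - (1 - t) * Vfun L S \<pi> y) / t"
  proof (rule Vfun_least[OF w])
    fix w1 assume "w1 \<in> Fb S w"
    from s1[OF this] t have "(1 - t) * Vfun L S \<pi> y \<le> M - t * lossE L \<pi> w1"
      by (simp add: pos_le_divide_eq mult.commute)
    then show "lossE L \<pi> w1 \<le> (M - (1 - t) * Vfun L S \<pi> y) / t"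
      using t by (simp add: pos_le_divide_eq mult.commute)
  qed
  then show ?thesis using t unfolding M_def[symmetric] by (simp add: pos_le_divide_eq mult.commute)
qed

lemma linf_diff_le: "linf c y - linf c x \<le> (\<Sum>z\<in>UNIV. \<bar>c$z\<bar>) * n1 (x - y)"
proof -
  have "linf c y - linf c x = (\<Sum>z\<in>UNIV. c$z * (y$z - x$z))"
    unfolding linf_def by (simp add: sum_subtractf[symmetric] algebra_simps)
  also have "\<dots> \<le> (\<Sum>z\<in>UNIV. (\<Sum>z'\<in>UNIV. \<bar>c$z'\<bar>) * \<bar>x$z - y$z\<bar>)"
  proof (intro sum_mono)
    fix z
    have "c$z * (y$z - x$z) \<le> \<bar>c$z\<bar> * \<bar>x$z - y$z\<bar>"
      by (metis abs_ge_self abs_minus_commute abs_mult)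
    also have "\<dots> \<le> (\<Sum>z'\<in>UNIV. \<bar>c$z'\<bar>) * \<bar>x$z - y$z\<bar>"
      by (intro mult_right_mono member_le_sum) auto
    finally show "c$z * (y$z - x$z) \<le> (\<Sum>z'\<in>UNIV. \<bar>c$z'\<bar>) * \<bar>x$z - y$z\<bar>" .
  qed
  also have "\<dots> = (\<Sum>z\<in>UNIV. \<bar>c$z\<bar>) * n1 (x - y)"
    unfolding n1_def by (simp add: sum_distrib_left)
  finally show ?thesis .
qed

lemma Vstar_lip:
  assumes rep: "is_repr Vs m c" and x: "x \<in> prob_simplex" and y: "y \<in> prob_simplex"
  shows "Vs y \<le> Vs x + (\<Sum>\<alpha><m. \<Sum>z\<in>UNIV. \<bar>c \<alpha> $ z\<bar>) * n1 (x - y)"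
proof -
  have m: "0 < m" and r: "\<forall>x\<in>prob_simplex. Vs x = Min ((\<lambda>\<alpha>. linf (c \<alpha>) x) ` {..<m})"
    using rep unfolding is_repr_def by auto
  have "Min ((\<lambda>\<alpha>. linf (c \<alpha>) x) ` {..<m}) \<in> (\<lambda>\<alpha>. linf (c \<alpha>) x) ` {..<m}"
    using m by (intro Min_in) auto
  then obtain \<beta> where b: "\<beta> < m" "Vs x = linf (c \<beta>) x" using r x by auto
  have "Vs y \<le> linf (c \<beta>) y" using r y b(1) by (simp add: Min_le)
  also have "\<dots> \<le> linf (c \<beta>) x + (\<Sum>z\<in>UNIV. \<bar>c \<beta> $ z\<bar>) * n1 (x - y)"
    using linf_diff_le[of "c \<beta>" y x] by linarith
  also have "(\<Sum>z\<in>UNIV. \<bar>c \<beta> $ z\<bar>) \<le> (\<Sum>\<alpha><m. \<Sum>z\<in>UNIV. \<bar>c \<alpha> $ z\<bar>)"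
    using b(1) by (intro member_le_sum[of \<beta> "{..<m}" "\<lambda>\<alpha>. \<Sum>z\<in>UNIV. \<bar>c \<alpha> $ z\<bar>"]) (auto intro: sum_nonneg)
  then have "linf (c \<beta>) x + (\<Sum>z\<in>UNIV. \<bar>c \<beta> $ z\<bar>) * n1 (x - y)
      \<le> linf (c \<beta>) x + (\<Sum>\<alpha><m. \<Sum>z\<in>UNIV. \<bar>c \<alpha> $ z\<bar>) * n1 (x - y)"
    using n1_nonneg[of "x - y"] by (simp add: mult_right_mono)
  finally show ?thesis using b(2) by simp
qed



lemma gap_zero_face:
  assumes hL: "\<forall>a z. 0 \<le> L a z \<and> L a z \<le> 1"
    and FF: "F face_of cell (Vstar L S) c \<alpha>" and x0: "x0 \<in> rel_interior F"
    and p: "\<pi> \<in> prob_simplex" and g0: "gap L S \<pi> x0 = 0" and yF: "y \<in> F"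
  shows "gap L S \<pi> y = 0"
proof -
  have Fsub: "F \<subseteq> cell (Vstar L S) c \<alpha>" using FF by (rule face_of_imp_subset)
  have cf: "u \<in> prob_simplex \<and> Vstar L S u = linf (c \<alpha>) u" if "u \<in> F" for u
    using Fsub that unfolding cell_def by auto
  have cvx: "convex F" using FF by (rule face_of_imp_convex)
  have Fne: "F \<noteq> {}" using yF by auto
  have x0F: "x0 \<in> F" using x0 rel_interior_subset by blast
  obtain e where e: "e > 1" and wF: "(1 - e) *\<^sub>R y + e *\<^sub>R x0 \<in> F"
    using x0 yF unfolding convex_rel_interior_iff[OF cvx Fne] by blast
  define w where "w = (1 - e) *\<^sub>R y + e *\<^sub>R x0"
  define t where "t = 1 / e"
  have t: "0 < t" "t < 1" using e unfolding t_def by auto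
  have x0eq: "x0 = (1 - t) *\<^sub>R y + t *\<^sub>R w"
  proof -
    have "x0$z = ((1 - t) *\<^sub>R y + t *\<^sub>R w)$z" for z
      using e unfolding t_def w_def by (simp add: field_simps)
    then show ?thesis by (simp add: vec_eq_iff)
  qed
  have yS: "y \<in> prob_simplex" and wS: "w \<in> prob_simplex" and x0S: "x0 \<in> prob_simplex"
    using cf yF wF x0F unfolding w_def by auto
  have conc: "(1 - t) * Vfun L S \<pi> y + t * Vfun L S \<pi> w \<le> Vfun L S \<pi> x0"
    using Vfun_concave[OF hL p yS wS t] x0eq by simp
  have lin: "linf (c \<alpha>) x0 = (1 - t) * linf (c \<alpha>) y + t * linf (c \<alpha>) w"
    using x0eq linf_comb by metis
  have gy: "gap L S \<pi> y = Vfun L S \<pi> y - linf (c \<alpha>) y" using cf[OF yF] unfolding gap_def by simp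
  have gw: "gap L S \<pi> w = Vfun L S \<pi> w - linf (c \<alpha>) w" using cf wF unfolding gap_def w_def by simp
  have gx: "gap L S \<pi> x0 = Vfun L S \<pi> x0 - linf (c \<alpha>) x0" using cf[OF x0F] unfolding gap_def by simp
  have "(1 - t) * gap L S \<pi> y + t * gap L S \<pi> w =
     ((1 - t) * Vfun L S \<pi> y + t * Vfun L S \<pi> w) - ((1 - t) * linf (c \<alpha>) y + t * linf (c \<alpha>) w)"
    unfolding gy gw by (simp add: algebra_simps)
  also have "\<dots> \<le> Vfun L S \<pi> x0 - linf (c \<alpha>) x0" using conc lin by linarith
  also have "\<dots> = gap L S \<pi> x0" using gx by simp
  finally have "(1 - t) * gap L S \<pi> y + t * gap L S \<pi> w \<le> gap L S \<pi> x0" .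
  then have "(1 - t) * gap L S \<pi> y \<le> 0"
    using g0 gap_nonneg[OF hL p wS] t by (smt (verit) mult_nonneg_nonneg)
  then have "gap L S \<pi> y \<le> 0" using t by (simp add: mult_le_0_iff)
  then show ?thesis using gap_nonneg[OF hL p yS, of S] by linarith
qed

theorem lemma9:
  fixes L :: "'a::finite \<Rightarrow> 'z::finite \<Rightarrow> real" and S :: "'a \<Rightarrow> 'z \<Rightarrow> 's"
    and m :: nat and c :: "nat \<Rightarrow> real^'z"
  assumes "\<forall>a z. 0 \<le> L a z \<and> L a z \<le> 1"
    and "is_repr (Vstar L S) m c"
    and "\<forall>n<m. \<forall>c'. \<not> is_repr (Vstar L S) n c'"
  shows "\<exists>Lip::real. \<forall>F\<in>face_family (Vstar L S) m c. F \<noteq> {} \<longrightarrow>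
           (\<forall>x\<in>prob_simplex. \<forall>\<pi>\<in>NF L S F. gap L S \<pi> x \<le> Lip * dist1 x F)"
proof -
  note hL = assms(1) and rep = assms(2)
  obtain C1 where C1: "C1 \<ge> 0" "\<forall>\<pi>\<in>prob_simplex. \<forall>x\<in>prob_simplex. \<forall>y\<in>prob_simplex.
           Vfun L S \<pi> x \<le> Vfun L S \<pi> y + C1 * n1 (x - y)"
    using Vfun_lip[OF hL, of S] by blast
  define K where "K = (\<Sum>\<alpha><m. \<Sum>z\<in>UNIV. \<bar>c \<alpha> $ z\<bar>)"
  have K: "K \<ge> 0" unfolding K_def by (intro sum_nonneg) auto
  define Lip where "Lip = C1 + K + 1"
  have Lp: "Lip > 0" using C1(1) K unfolding Lip_def by linarith
  show ?thesis
  proof (intro exI[of _ Lip] ballI impI)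
    fix F :: "(real^'z) set" and x :: "real^'z" and \<pi> :: "real^'a"
    assume FF: "F \<in> face_family (Vstar L S) m c" and Fne: "F \<noteq> {}"
      and x: "x \<in> prob_simplex" and pN: "\<pi> \<in> NF L S F"
    obtain \<alpha> where \<alpha>: "\<alpha> < m" "F face_of cell (Vstar L S) c \<alpha>"
      using FF unfolding face_family_def by blast
    have cvx: "convex F" using \<alpha>(2) by (rule face_of_imp_convex)
    have "rel_interior F \<noteq> {}" using rel_interior_eq_empty[OF cvx] Fne by simp
    then have x0: "(SOME x. x \<in> rel_interior F) \<in> rel_interior F" by (meson ex_in_conv someI_ex)
    have p: "\<pi> \<in> prob_simplex" and g0: "gap L S \<pi> (SOME x. x \<in> rel_interior F) = 0"
      using pN unfolding NF_def Nset_def by auto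
    have bnd: "gap L S \<pi> x / Lip \<le> (\<Sum>z\<in>UNIV. \<bar>x $ z - y $ z\<bar>)" if yF: "y \<in> F" for y :: "real^'z"
    proof -
      have yS: "y \<in> prob_simplex" using face_of_imp_subset[OF \<alpha>(2)] yF unfolding cell_def by auto
      have gy: "gap L S \<pi> y = 0" by (rule gap_zero_face[OF hL \<alpha>(2) x0 p g0 yF])
      have v1: "Vfun L S \<pi> x \<le> Vfun L S \<pi> y + C1 * n1 (x - y)" using C1(2) p x yS by blast
      have v2: "Vstar L S y \<le> Vstar L S x + K * n1 (x - y)"
        unfolding K_def by (rule Vstar_lip[OF rep x yS])
      have "gap L S \<pi> x \<le> gap L S \<pi> y + (C1 + K) * n1 (x - y)"
        using v1 v2 unfolding gap_def by (simp add: algebra_simps)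
      also have "\<dots> \<le> Lip * n1 (x - y)" using gy n1_nonneg[of "x - y"] unfolding Lip_def
        by (simp add: mult_right_mono)
      finally have "gap L S \<pi> x \<le> Lip * n1 (x - y)" .
      then have "gap L S \<pi> x / Lip \<le> n1 (x - y)" using Lp by (simp add: pos_divide_le_eq mult.commute)
      then show ?thesis unfolding n1_def by simp
    qed
    have "gap L S \<pi> x / Lip \<le> dist1 x F" unfolding dist1_def
      using Fne bnd by (intro cINF_greatest) auto
    then show "gap L S \<pi> x \<le> Lip * dist1 x F" using Lp by (simp add: pos_divide_le_eq mult.commute)
  qed
qed


end
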